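(* Let $n\ge2$, $M\in\mathbb{R}$, let $\widetilde f:B_M\to B$ be $\eta$-quasisymmetric, let $t_0<M-1$ and $t\in(0,1/2)$. Subdivide $Q$ into $(n-1)$-dimensional cubes $T_1,\dots,T_N$ of side length $(\lfloor 1/t\rfloor)^{-1}$ with edges parallel to $e_1,\dots,e_{n-1}$, and set $P_i=T_i\times[t_0,t_0+t]$, so the $P_i$ subdivide $S_t=Q\times[t_0,t_0+t]$. Then the number $N$ of boxes satisfies $N/t^{1-n}\to 2$ as $t\to0$. Moreover, there exists a constant $C_1>1$ depending only on $n$ and $\eta$ such that for each $i$, $$\frac{1}{C_1}\le\frac{\operatorname{vol}_n\widetilde f(P_i)}{(\operatorname{diam}\widetilde f(P_i))^n}\le C_1.$$
   Context: $B=Q\times\mathbb{R}$ where $Q\subset\mathbb{R}^{n-1}$ is the open cuboid with closure $[0,1]^{n-2}\times[0,2]$; $B$ is the fundamental beam of a fixed Zorich map $\mathcal{Z}$ (with automorphism group $G$ of isometries preserving the $n$-th coordinate, generated by a rank $n-1$ translation subgroup and a finite rotation group, identifying the sides of $B$), and $B$ carries the quotient of the Euclidean metric under $G$. $B_M=Q\times(-\infty,M)$. $\operatorname{vol}_n$ denotes $n$-dimensional Lebesgue measure. A map $h$ between metric spaces is $\eta$-quasisymmetric, for a homeomorphism $\eta:[0,\infty)\to[0,\infty)$, if $d(h(x),h(a))/d(h(x),h(b))\le\eta(d(x,a)/d(x,b))$ for all $x,a,b$ with $x\ne b$. *)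

theory Defs
  imports "HOL-Analysis.Analysis"
begin

text \<open>Points of R^n are modelled as pairs (y, s) with y in R^(n-1) = real^'m and
 s the n-th coordinate; so n = CARD('m) + 1 \<ge> 2. The product metric on
 real^'m \<times> real is the Euclidean one.\<close>

type_synonym 'm pt = "(real^'m) \<times> real"

definition cuboidQ :: "'m::finite \<Rightarrow> (real^'m) set" where
  "cuboidQ j0 = {y. \<forall>i. 0 < y$i \<and> y$i < (if i = j0 then 2 else 1)}"

definition beam :: "'m::finite \<Rightarrow> 'm pt set" where
  "beam j0 = cuboidQ j0 \<times> UNIV"

definition beamM :: "'m::finite \<Rightarrow> real \<Rightarrow> 'm pt set" where
  "beamM j0 M = cuboidQ j0 \<times> {..<M}"

inductive_set gen_grp :: "('a \<Rightarrow> 'a) set \<Rightarrow> ('a \<Rightarrow> 'a) set" for S where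
  gen_id: "id \<in> gen_grp S"
| gen_mul: "s \<in> S \<Longrightarrow> g \<in> gen_grp S \<Longrightarrow> s \<circ> g \<in> gen_grp S"
| gen_inv: "s \<in> S \<Longrightarrow> g \<in> gen_grp S \<Longrightarrow> inv s \<circ> g \<in> gen_grp S"

definition isometry :: "('a::metric_space \<Rightarrow> 'a) \<Rightarrow> bool" where
  "isometry g \<longleftrightarrow> surj g \<and> (\<forall>x y. dist (g x) (g y) = dist x y)"

definition lattice_translations :: "(real^'m::finite) set \<Rightarrow> ('m pt \<Rightarrow> 'm pt) set" where
  "lattice_translations V =
     {(\<lambda>x. x + ((\<Sum>v\<in>V. of_int (k v) *\<^sub>R v), 0)) | k. True}"

text \<open>Automorphism group of the fixed Zorich map: a group of isometries of R^n
 preserving the n-th coordinate, generated by a rank n-1 translation subgroup and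
 a finite rotation group, for which the beam B is a fundamental domain
 (the sides of B being identified by G).\<close>
definition zorich_group :: "('m::finite pt \<Rightarrow> 'm pt) set \<Rightarrow> 'm \<Rightarrow> bool" where
  "zorich_group G j0 \<longleftrightarrow>
     id \<in> G \<and> (\<forall>g\<in>G. \<forall>h\<in>G. g \<circ> h \<in> G) \<and> (\<forall>g\<in>G. bij g \<and> inv g \<in> G) \<and>
     (\<forall>g\<in>G. isometry g) \<and> (\<forall>g\<in>G. \<forall>x. snd (g x) = snd x) \<and>
     (\<exists>V R. finite V \<and> card V = CARD('m) \<and> independent V \<and>
        finite R \<and> R \<subseteq> G \<and> id \<in> R \<and> (\<forall>r\<in>R. \<forall>s\<in>R. r \<circ> s \<in> R \<and> inv r \<in> R) \<and>
        G = gen_grp (lattice_translations V \<union> R)) \<and>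
     (\<Union>g\<in>G. g ` closure (beam j0)) = UNIV \<and>
     (\<forall>g\<in>G. g \<noteq> id \<longrightarrow> g ` beam j0 \<inter> beam j0 = {})"

text \<open>Quotient metric on B induced by the Euclidean metric under G.\<close>
definition dB :: "('m::finite pt \<Rightarrow> 'm pt) set \<Rightarrow> 'm pt \<Rightarrow> 'm pt \<Rightarrow> real" where
  "dB G x y = Inf {dist x (g y) | g. g \<in> G}"

definition dB_diam :: "('m::finite pt \<Rightarrow> 'm pt) set \<Rightarrow> 'm pt set \<Rightarrow> real" where
  "dB_diam G S = (SUP p\<in>S \<times> S. dB G (fst p) (snd p))"

definition qs_gauge :: "(real \<Rightarrow> real) \<Rightarrow> bool" where
  "qs_gauge \<eta> \<longleftrightarrow> (\<exists>\<eta>'. homeomorphism {0..} {0..} \<eta> \<eta>')"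

definition quasisymmetric_on ::
  "('a \<Rightarrow> 'a \<Rightarrow> real) \<Rightarrow> ('b \<Rightarrow> 'b \<Rightarrow> real) \<Rightarrow> 'a set \<Rightarrow> ('a \<Rightarrow> 'b) \<Rightarrow> (real \<Rightarrow> real) \<Rightarrow> bool" where
  "quasisymmetric_on d d' S h \<eta> \<longleftrightarrow> inj_on h S \<and>
     (\<forall>x\<in>S. \<forall>a\<in>S. \<forall>b\<in>S. x \<noteq> b \<longrightarrow>
        d' (h x) (h a) / d' (h x) (h b) \<le> \<eta> (d x a / d x b))"

definition cube_idx :: "'m::finite \<Rightarrow> real \<Rightarrow> ('m \<Rightarrow> int) set" where
  "cube_idx j0 t = {j. \<forall>i. 0 \<le> j i \<and> j i < (if i = j0 then 2 else 1) * \<lfloor>1/t\<rfloor>}"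

definition cubeT :: "'m::finite \<Rightarrow> real \<Rightarrow> ('m \<Rightarrow> int) \<Rightarrow> (real^'m) set" where
  "cubeT j0 t j = {y \<in> cuboidQ j0. \<forall>i. real_of_int (j i) / real_of_int \<lfloor>1/t\<rfloor> \<le> y$i
        \<and> y$i \<le> real_of_int (j i + 1) / real_of_int \<lfloor>1/t\<rfloor>}"

definition boxP :: "'m::finite \<Rightarrow> real \<Rightarrow> real \<Rightarrow> ('m \<Rightarrow> int) \<Rightarrow> 'm pt set" where
  "boxP j0 t0 t j = cubeT j0 t j \<times> {t0..t0+t}"

end

theory Submission
  imports Defs
begin


lemma measure_ball_eq:
  fixes c :: "'a::euclidean_space"
  assumes "0 \<le> r"
  shows "measure lebesgue (ball c r) = r ^ DIM('a) * measure lebesgue (ball (0::'a) 1)"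
proof -
  have "measure lebesgue (ball c r) = measure lborel (ball c r)"
    by (simp add: measure_completion)
  also have "\<dots> = r ^ DIM('a) * measure lborel (ball (0::'a) 1)"
    using content_ball_conv_unit_ball[OF assms, of c] by simp
  also have "measure lborel (ball (0::'a) 1) = measure lebesgue (ball (0::'a) 1)"
    by (simp add: measure_completion)
  finally show ?thesis .
qed

lemma unit_ball_pos: "0 < measure lebesgue (ball (0::'a::euclidean_space) 1)"
  using content_ball_pos[of 1 "0::'a"] by (simp add: measure_completion)

lemma eta_props:
  assumes "qs_gauge \<eta>"
  shows "\<eta> 0 = 0" "\<And>a b. 0 \<le> a \<Longrightarrow> a < b \<Longrightarrow> \<eta> a < \<eta> b"
    "continuous_on {0..} \<eta>" "\<And>a. 0 \<le> a \<Longrightarrow> 0 \<le> \<eta> a"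
proof -
  obtain \<eta>' where h: "homeomorphism {0..} {0..} \<eta> \<eta>'"
    using assms unfolding qs_gauge_def by blast
  have cont: "continuous_on {0..} \<eta>" using h by (simp add: homeomorphism_def)
  have img: "\<eta> ` {0..} = {0..}" using h by (simp add: homeomorphism_def)
  have inj: "inj_on \<eta> {0..}" using h homeomorphism_apply1 by (metis inj_on_inverseI)
  show nn: "\<And>a. 0 \<le> a \<Longrightarrow> 0 \<le> \<eta> a" using img by auto
  have mono3: "(\<eta> a < \<eta> x \<and> \<eta> x < \<eta> b) \<or> (\<eta> b < \<eta> x \<and> \<eta> x < \<eta> a)"
    if "0 \<le> a" "a < x" "x < b" for a x b
  proof (rule continuous_inj_imp_mono[OF that(2,3)])
    show "continuous_on {a..b} \<eta>" using cont by (rule continuous_on_subset) (use that in auto)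
    show "inj_on \<eta> {a..b}" using inj by (rule inj_on_subset) (use that in auto)
  qed
  obtain z where z: "z \<ge> 0" "\<eta> z = 0" using img by (metis atLeast_iff image_iff order_refl)
  show e0: "\<eta> 0 = 0"
  proof (rule ccontr)
    assume "\<eta> 0 \<noteq> 0"
    then have "z > 0" using z by (cases "z = 0") auto
    from mono3[of 0 z "2*z"] this z nn[of "2*z"] nn[of 0] show False by auto
  qed
  show "\<eta> a < \<eta> b" if "0 \<le> a" "a < b" for a b
  proof (cases "a = 0")
    case True
    then show ?thesis using e0 nn[of b] inj that unfolding inj_on_def
      by (metis atLeast_iff less_eq_real_def order_less_irrefl)
  next
    case False
    then show ?thesis using mono3[of 0 a b] that e0 nn[of b] by auto
  qed
  show "continuous_on {0..} \<eta>" by (rule cont)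
qed



lemma iso_cball_image:
  fixes h :: "'a::metric_space \<Rightarrow> 'a"
  assumes iso: "\<forall>x y. dist (h x) (h y) = dist x y" and surj: "surj h"
  shows "h ` cball c r = cball (h c) r" "h ` ball c r = ball (h c) r"
proof -
  show "h ` cball c r = cball (h c) r"
  proof
    show "h ` cball c r \<subseteq> cball (h c) r" using iso by auto
    show "cball (h c) r \<subseteq> h ` cball c r"
    proof
      fix y assume "y \<in> cball (h c) r"
      obtain x where "y = h x" using surj by (metis surjD)
      then show "y \<in> h ` cball c r" using \<open>y \<in> cball (h c) r\<close> iso by auto
    qed
  qed
  show "h ` ball c r = ball (h c) r"
  proof
    show "h ` ball c r \<subseteq> ball (h c) r" using iso by auto
    show "ball (h c) r \<subseteq> h ` ball c r"
    proof
      fix y assume "y \<in> ball (h c) r"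
      obtain x where "y = h x" using surj by (metis surjD)
      then show "y \<in> h ` ball c r" using \<open>y \<in> ball (h c) r\<close> iso by auto
    qed
  qed
qed

lemma measure_cball_transl:
  fixes c d :: "'a::euclidean_space"
  shows "measure lebesgue (cball c r) = measure lebesgue (cball d r)"
proof -
  have "(+) (d - c) ` cball c r = cball d r"
  proof
    show "(+) (d - c) ` cball c r \<subseteq> cball d r" by (auto simp: dist_norm algebra_simps)
    show "cball d r \<subseteq> (+) (d - c) ` cball c r"
    proof
      fix y assume "y \<in> cball d r"
      then have "y - (d - c) \<in> cball c r" by (auto simp: dist_norm algebra_simps)
      then show "y \<in> (+) (d - c) ` cball c r" by (rule rev_image_eqI) simp
    qed
  qed
  then show ?thesis using measure_translation[of "d - c" "cball c r"] by simp
qed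

lemma iso_measure_le:
  fixes h :: "'a::euclidean_space \<Rightarrow> 'a"
  assumes iso: "\<forall>x y. dist (h x) (h y) = dist x y" and surj: "surj h"
    and E: "E \<in> lmeasurable" and hE: "h ` E \<in> sets lebesgue"
  shows "measure lebesgue (h ` E) \<le> measure lebesgue E"
proof (rule field_le_epsilon)
  fix e :: real assume "e > 0"
  obtain T where T: "open T" "E \<subseteq> T" "(T - E) \<in> lmeasurable" "emeasure lebesgue (T - E) < ennreal e"
    using sets_lebesgue_outer_open[of E e] E \<open>e > 0\<close> by (auto simp: fmeasurable_def)
  have TE: "T = E \<union> (T - E)" using T by auto
  have Tm: "T \<in> lmeasurable" using E T(3) TE by (metis fmeasurable.Un)
  have "measure lebesgue (T - E) < e"
    using T(3,4) by (metis emeasure_eq_measure2 ennreal_less_iff measure_nonneg)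
  then have mT: "measure lebesgue T \<le> measure lebesgue E + e"
    using measure_Un_le[of E lebesgue "T - E"] E T(3) TE by (auto simp: fmeasurable_def)
  define K where "K = {(c, r). c \<in> E \<and> 0 < r \<and> cball c r \<subseteq> T}"
  obtain C where C: "countable C" "C \<subseteq> K"
     "pairwise (\<lambda>i j. disjnt (cball (fst i) (snd i)) (cball (fst j) (snd j))) C"
     "negligible (E - (\<Union>i \<in> C. cball (fst i) (snd i)))"
  proof (rule Vitali_covering_theorem_cballs[of K snd E fst])
    show "0 < snd i" if "i \<in> K" for i using that by (auto simp: K_def)
    show "\<exists>i. i \<in> K \<and> x \<in> cball (fst i) (snd i) \<and> snd i < d" if "x \<in> E" "0 < d" for x d
    proof -
      have "x \<in> T" using T(2) that(1) by blast
      then obtain \<epsilon> where "\<epsilon> > 0" "cball x \<epsilon> \<subseteq> T" using T(1) open_contains_cball by metis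
      then have "cball x (min \<epsilon> (d/2)) \<subseteq> T" using subset_cball[of "min \<epsilon> (d/2)" \<epsilon> x] by (meson min.cobounded1 order_trans)
      then have "(x, min \<epsilon> (d/2)) \<in> K" using that \<open>\<epsilon> > 0\<close> by (simp add: K_def)
      moreover have "min \<epsilon> (d/2) < d" using that by simp
      ultimately show ?thesis using \<open>\<epsilon> > 0\<close> that by (intro exI[of _ "(x, min \<epsilon> (d/2))"]) simp
    qed
  qed blast
  define N where "N = E - (\<Union>i \<in> C. cball (fst i) (snd i))"
  have nN: "negligible (h ` N)"
  proof (rule negligible_locally_Lipschitz_image)
    show "negligible N" using C(4) by (simp add: N_def)
    show "\<exists>T B. open T \<and> x \<in> T \<and> (\<forall>y\<in>N \<inter> T. norm (h y - h x) \<le> B * norm (y - x))" for x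
      using iso by (intro exI[of _ UNIV] exI[of _ 1]) (simp add: dist_norm)
  qed simp
  define U where "U = (\<Union>i \<in> C. cball (h (fst i)) (snd i))"
  have bnd: "measure lebesgue (\<Union>i\<in>I'. cball (h (fst i)) (snd i)) \<le> measure lebesgue T"
    if I': "I' \<subseteq> C" "finite I'" for I'
  proof -
    have "measure lebesgue (\<Union>i\<in>I'. cball (h (fst i)) (snd i)) \<le> (\<Sum>i\<in>I'. measure lebesgue (cball (h (fst i)) (snd i)))"
      by (rule measure_UNION_le) (use I' in auto)
    also have "\<dots> = (\<Sum>i\<in>I'. measure lebesgue (cball (fst i) (snd i)))"
      by (rule sum.cong[OF refl], rule measure_cball_transl)
    also have "\<dots> = measure lebesgue (\<Union>i\<in>I'. cball (fst i) (snd i))"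
      by (rule measure_UNION'[symmetric]) (use I' C(3) in \<open>auto intro: pairwise_subset\<close>)
    also have "\<dots> \<le> measure lebesgue T"
      by (rule measure_mono_fmeasurable) (use I' C(2) Tm in \<open>auto simp: K_def subset_iff\<close>, blast)
    finally show ?thesis .
  qed
  have Ubd: "U \<in> fmeasurable lebesgue \<and> measure lebesgue U \<le> measure lebesgue T"
    unfolding U_def
    using fmeasurable_UN_bound[OF C(1) _ bnd] measure_UN_bound[OF C(1) _ bnd] by auto
  have sub: "h ` E \<subseteq> U \<union> h ` N"
  proof
    fix y assume "y \<in> h ` E"
    then obtain x where x: "x \<in> E" "y = h x" by blast
    show "y \<in> U \<union> h ` N"
    proof (cases "x \<in> N")
      case True then show ?thesis using x by blast
    next
      case False
      then obtain i where "i \<in> C" "dist (fst i) x \<le> snd i" using x by (auto simp: N_def)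
      then show ?thesis using x iso by (auto simp: U_def)
    qed
  qed
  have "measure lebesgue (h ` E) \<le> measure lebesgue (U \<union> h ` N)"
    by (rule measure_mono_fmeasurable[OF sub hE]) (use Ubd nN in \<open>simp add: negligible_iff_null_sets fmeasurable.Un fmeasurableI_null_sets\<close>)
  also have "\<dots> = measure lebesgue U"
    using Ubd nN by (simp add: measure_Un_null_set negligible_iff_null_sets fmeasurable_def)
  finally show "measure lebesgue (h ` E) \<le> measure lebesgue E + e" using Ubd mT by linarith
qed



lemma zg_facts:
  assumes "zorich_group G j0"
  shows "id \<in> G" "\<And>g h. g \<in> G \<Longrightarrow> h \<in> G \<Longrightarrow> g \<circ> h \<in> G"
    "\<And>g. g \<in> G \<Longrightarrow> bij g" "\<And>g. g \<in> G \<Longrightarrow> inv g \<in> G"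
    "\<And>g x y. g \<in> G \<Longrightarrow> dist (g x) (g y) = dist x y"
    "\<And>g. g \<in> G \<Longrightarrow> surj g"
    "\<And>g x. g \<in> G \<Longrightarrow> snd (g x) = snd x"
    "\<And>g. g \<in> G \<Longrightarrow> g \<noteq> id \<Longrightarrow> g ` beam j0 \<inter> beam j0 = {}"
proof -
  note z = assms[unfolded zorich_group_def isometry_def]
  show "id \<in> G" using z by (elim conjE) assumption
  show "\<And>g h. g \<in> G \<Longrightarrow> h \<in> G \<Longrightarrow> g \<circ> h \<in> G" using z by (elim conjE) blast
  show "\<And>g. g \<in> G \<Longrightarrow> bij g" using z by (elim conjE) blast
  show "\<And>g. g \<in> G \<Longrightarrow> inv g \<in> G" using z by (elim conjE) blast
  show "\<And>g x y. g \<in> G \<Longrightarrow> dist (g x) (g y) = dist x y" using z by (elim conjE) blast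
  show "\<And>g. g \<in> G \<Longrightarrow> surj g" using z by (elim conjE) blast
  show "\<And>g x. g \<in> G \<Longrightarrow> snd (g x) = snd x" using z by (elim conjE) blast
  show "\<And>g. g \<in> G \<Longrightarrow> g \<noteq> id \<Longrightarrow> g ` beam j0 \<inter> beam j0 = {}" using z by (elim conjE) blast
qed

lemma dB_le_elem:
  assumes "zorich_group G j0" "g \<in> G"
  shows "dB G x y \<le> dist x (g y)"
  unfolding dB_def by (rule cInf_lower) (use assms in \<open>auto intro!: bdd_belowI[of _ 0]\<close>)

lemma dB_le_dist:
  assumes "zorich_group G j0"
  shows "dB G x y \<le> dist x y"
  using dB_le_elem[OF assms zg_facts(1)[OF assms]] by simp

lemma dB_geI:
  assumes "zorich_group G j0" "\<And>g. g \<in> G \<Longrightarrow> c \<le> dist x (g y)"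
  shows "c \<le> dB G x y"
  unfolding dB_def by (rule cInf_greatest) (use assms zg_facts(1)[OF assms(1)] in auto)

lemma dB_nonneg:
  assumes "zorich_group G j0"
  shows "0 \<le> dB G x y"
  using dB_geI[OF assms, of 0 x y] by simp

lemma dB_lt_ex:
  assumes "zorich_group G j0" "dB G x y < r"
  obtains g where "g \<in> G" "dist x (g y) < r"
proof -
  have "\<exists>d\<in>{dist x (g y) |g. g \<in> G}. d < r"
    by (rule cInf_lessD) (use assms zg_facts(1)[OF assms(1)] in \<open>auto simp: dB_def\<close>)
  then show ?thesis using that by blast
qed

lemma dist_inv_move:
  assumes "zorich_group G j0" "g \<in> G"
  shows "dist x (g y) = dist y (inv g x)"
proof -
  have "g (inv g x) = x" using zg_facts(6)[OF assms] by (simp add: surj_f_inv_f)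
  then have "dist x (g y) = dist (g (inv g x)) (g y)" by simp
  also have "\<dots> = dist (inv g x) y" using zg_facts(5)[OF assms] by simp
  finally show ?thesis by (simp add: dist_commute)
qed

lemma dB_sym:
  assumes "zorich_group G j0"
  shows "dB G x y = dB G y x"
proof -
  have *: "dB G a b \<le> dB G b a" for a b
  proof (rule dB_geI[OF assms])
    fix g assume g: "g \<in> G"
    have "dist b (g a) = dist a (inv g b)" by (rule dist_inv_move[OF assms g])
    also have "dB G a b \<le> \<dots>" by (rule dB_le_elem[OF assms zg_facts(4)[OF assms g]])
    finally show "dB G a b \<le> dist b (g a)" .
  qed
  show ?thesis using *[of x y] *[of y x] by linarith
qed

lemma dB_triangle:
  assumes "zorich_group G j0"
  shows "dB G x z \<le> dB G x y + dB G y z"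
proof (rule ccontr)
  assume nt: "\<not> dB G x z \<le> dB G x y + dB G y z"
  define e where "e = (dB G x z - dB G x y - dB G y z) / 2"
  have "e > 0" using nt by (simp add: e_def)
  have l1: "dB G x y < dB G x y + e" using \<open>e > 0\<close> by simp
  obtain g where g: "g \<in> G" "dist x (g y) < dB G x y + e"
    by (rule dB_lt_ex[OF assms l1])
  have l2: "dB G y z < dB G y z + e" using \<open>e > 0\<close> by simp
  obtain h where h: "h \<in> G" "dist y (h z) < dB G y z + e"
    by (rule dB_lt_ex[OF assms l2])
  have t: "dist x (g (h z)) \<le> dist x (g y) + dist (g y) (g (h z))" by (rule dist_triangle)
  have t2: "dist (g y) (g (h z)) = dist y (h z)" using zg_facts(5)[OF assms g(1)] by simp
  have "dB G x z \<le> dist x ((g \<circ> h) z)"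
    by (rule dB_le_elem[OF assms zg_facts(2)[OF assms g(1) h(1)]])
  then have "dB G x z \<le> dist x (g (h z))" by simp
  moreover have "2 * e = dB G x z - dB G x y - dB G y z" by (simp add: e_def)
  ultimately show False using t t2 g(2) h(2) by linarith
qed

lemma dB_ge_min:
  assumes "zorich_group G j0" "x \<in> beam j0" "y \<in> beam j0" "ball x r \<subseteq> beam j0"
  shows "min (dist x y) r \<le> dB G x y"
proof (rule dB_geI[OF assms(1)])
  fix g assume g: "g \<in> G"
  show "min (dist x y) r \<le> dist x (g y)"
  proof (cases "g = id")
    case True then show ?thesis by simp
  next
    case False
    then have "g y \<notin> beam j0" using zg_facts(8)[OF assms(1) g False] assms(3) by blast
    then have "g y \<notin> ball x r" using assms(4) by blast
    then show ?thesis by (simp add: dist_commute)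
  qed
qed

lemma open_cuboidQ: "open (cuboidQ j0)"
proof -
  have "cuboidQ j0 = (\<Inter>i. {y. 0 < y$i} \<inter> {y. y$i < (if i = j0 then 2 else 1)})"
    unfolding cuboidQ_def by blast
  also have "open \<dots>"
    by (intro open_INT ballI open_Int open_Collect_less continuous_intros) auto
  finally show ?thesis .
qed

lemma open_beam: "open (beam j0)"
  unfolding beam_def by (intro open_Times open_cuboidQ) auto

lemma open_beamM: "open (beamM j0 M)"
  unfolding beamM_def by (intro open_Times open_cuboidQ) auto

lemma beamM_sub: "beamM j0 M \<subseteq> beam j0"
  unfolding beamM_def beam_def by auto

lemma dB_pos:
  assumes "zorich_group G j0" "x \<in> beam j0" "y \<in> beam j0" "x \<noteq> y"
  shows "0 < dB G x y"
proof -
  have "open (beam j0)"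
  proof -
    have "open (cuboidQ j0)"
    proof -
      have "cuboidQ j0 = (\<Inter>i. {y. 0 < y$i} \<inter> {y. y$i < (if i = j0 then 2 else 1)})"
        unfolding cuboidQ_def by blast
      also have "open \<dots>"
        by (intro open_INT ballI open_Int open_Collect_less continuous_intros) auto
      finally show ?thesis .
    qed
    then show ?thesis unfolding beam_def by (intro open_Times) auto
  qed
  then obtain r where "r > 0" "ball x r \<subseteq> beam j0" using assms(2) open_contains_ball by blast
  then have "min (dist x y) r \<le> dB G x y" using dB_ge_min[OF assms(1-3)] by blast
  moreover have "0 < min (dist x y) r" using \<open>r > 0\<close> assms(4) by simp
  ultimately show ?thesis by linarith
qed



lemma qs_ineq:
  assumes "quasisymmetric_on d d' S h \<eta>" "x \<in> S" "a \<in> S" "b \<in> S" "x \<noteq> b"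
  shows "d' (h x) (h a) / d' (h x) (h b) \<le> \<eta> (d x a / d x b)"
  using assms unfolding quasisymmetric_on_def by blast

lemma qs_mult:
  assumes "quasisymmetric_on d d' S h \<eta>" "x \<in> S" "a \<in> S" "b \<in> S" "x \<noteq> b"
    and "0 < d' (h x) (h b)"
  shows "d' (h x) (h a) \<le> \<eta> (d x a / d x b) * d' (h x) (h b)"
  using qs_ineq[OF assms(1-5)] assms(6) by (simp add: divide_le_eq)

lemma f_cont:
  assumes zg: "zorich_group G j0" and qs: "qs_gauge \<eta>"
    and Q: "quasisymmetric_on (dB G) (dB G) (beamM j0 M) f \<eta>"
    and img: "f ` beamM j0 M \<subseteq> beam j0"
  shows "continuous_on (beamM j0 M) f"
  unfolding continuous_on_iff
proof (intro ballI allI impI)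
  fix a e assume a: "a \<in> beamM j0 M" and e: "(0::real) < e"
  define b where "b = (fst a, snd a - 1)"
  have b: "b \<in> beamM j0 M" "a \<noteq> b" using a by (auto simp: b_def beamM_def)
  have inj: "inj_on f (beamM j0 M)" using Q by (simp add: quasisymmetric_on_def)
  have fab: "f a \<noteq> f b" using inj a b by (meson inj_on_contraD)
  have c: "0 < dB G (f a) (f b)" by (rule dB_pos[OF zg _ _ fab]) (use img a b in auto)
  have dab: "0 < dB G a b" by (rule dB_pos[OF zg _ _ b(2)]) (use beamM_sub a b in auto)
  obtain r where r: "r > 0" "ball (f a) r \<subseteq> beam j0"
    using open_beam[of j0] img a open_contains_ball by blast
  define e' where "e' = min e r"
  have e': "e' > 0" using e r by (simp add: e'_def)
  have ec: "e' / dB G (f a) (f b) > 0" using e' c by simp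
  have ct: "continuous_on {0..} \<eta>" by (rule eta_props(3)[OF qs])
  obtain s where s: "s > 0" "\<And>z. z \<in> {0..} \<Longrightarrow> dist z 0 < s \<Longrightarrow> dist (\<eta> z) (\<eta> 0) < e' / dB G (f a) (f b)"
    using ct[unfolded continuous_on_iff] ec by (meson atLeast_iff order_refl)
  show "\<exists>d>0. \<forall>x'\<in>beamM j0 M. dist x' a < d \<longrightarrow> dist (f x') (f a) < e"
  proof (intro exI[of _ "s * dB G a b"] conjI ballI impI)
    show "0 < s * dB G a b" using s dab by simp
    fix y assume y: "y \<in> beamM j0 M" "dist y a < s * dB G a b"
    define z where "z = dB G a y / dB G a b"
    have z0: "0 \<le> z" using dab dB_nonneg[OF zg] by (simp add: z_def)
    have "dB G a y \<le> dist a y" by (rule dB_le_dist[OF zg])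
    then have "dB G a y < s * dB G a b" using y(2) by (simp add: dist_commute)
    then have zs: "z < s" using dab by (simp add: z_def divide_less_eq)
    have "\<eta> z < e' / dB G (f a) (f b)"
      using s(2)[of z] z0 zs eta_props(1,4)[OF qs] by (simp add: dist_real_def)
    moreover have "dB G (f a) (f y) \<le> \<eta> z * dB G (f a) (f b)"
      unfolding z_def by (rule qs_mult[OF Q a y(1) b(1) b(2) c])
    ultimately have "dB G (f a) (f y) < e'" using c by (simp add: pos_less_divide_eq mult.commute) 
    moreover have "min (dist (f a) (f y)) r \<le> dB G (f a) (f y)"
      by (rule dB_ge_min[OF zg _ _ r(2)]) (use img a y in auto)
    ultimately have "dist (f a) (f y) < e'" unfolding e'_def by linarith
    then show "dist (f y) (f a) < e" by (simp add: e'_def dist_commute)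
  qed
qed



lemma box_geom:
  fixes j0 :: "'m::finite"
  assumes t: "0 < t" "t < 1/2" and tM: "t0 < M - 1" and j: "j \<in> cube_idx j0 t"
  obtains x :: "'m pt" and Kc where "ball x (t/2) \<subseteq> beam j0" "cball x (t/4) \<subseteq> boxP j0 t0 t j"
    "boxP j0 t0 t j \<subseteq> beamM j0 M" "\<And>p. p \<in> boxP j0 t0 t j \<Longrightarrow> dist x p \<le> (real CARD('m) + 1) * t"
    "compact Kc" "boxP j0 t0 t j = Kc \<inter> beam j0"
proof -
  define k where "k = \<lfloor>1/t\<rfloor>"
  define kr where "kr = real_of_int k"
  have "2 < 1/t" using t by (simp add: field_simps)
  then have "(2::int) \<le> k" unfolding k_def le_floor_iff by simp
  then have k2: "2 \<le> kr" unfolding kr_def by simp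
  have "kr \<le> 1/t" unfolding kr_def k_def by (rule of_int_floor_le)
  then have "kr * t \<le> (1/t) * t" using t by (intro mult_right_mono) auto
  then have kt1: "kr * t \<le> 1" using t by simp
  have kt2: "1/t < kr + 1" unfolding kr_def k_def by linarith
  then have kt3: "1 < kr * t + t" using t by (simp add: field_simps)
  define hk where "hk = 1 / kr"
  have hk1: "t \<le> hk" using kt1 k2 by (simp add: hk_def field_simps)
  have hk2: "hk \<le> 2 * t" using kt3 k2 t by (simp add: hk_def field_simps)
  define c :: "'m \<Rightarrow> real" where "c i = (if i = j0 then 2 else 1)" for i
  have ji: "0 \<le> real_of_int (j i)" "real_of_int (j i) + 1 \<le> c i * kr" for i
  proof -
    have "0 \<le> j i \<and> j i < (if i = j0 then 2 else 1) * k" using j by (simp add: cube_idx_def k_def)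
    then have "0 \<le> j i" "j i + 1 \<le> (if i = j0 then 2 else 1) * k" by auto
    then show "0 \<le> real_of_int (j i)" "real_of_int (j i) + 1 \<le> c i * kr"
      by (auto simp: c_def kr_def)
  qed
  define lo where "lo i = real_of_int (j i) / kr" for i
  have lo0: "0 \<le> lo i" for i using ji k2 by (simp add: lo_def)
  have hi: "lo i + hk \<le> c i" for i using ji[of i] k2 by (simp add: lo_def hk_def field_simps)
  have hieq0: "(real_of_int (j i) + 1) / kr = lo i + hk" for i by (simp add: lo_def hk_def add_divide_distrib)
  have hieq: "real_of_int (j i + 1) / kr = lo i + hk" "(real_of_int (j i) + 1) / kr = lo i + hk" for i
    using hieq0 by simp_all
  define yc :: "real^'m" where "yc = (\<chi> i. lo i + hk / 2)"
  define x where "x = (yc, t0 + t/2)"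
  have comp: "\<bar>fst p $ i - yc $ i\<bar> \<le> dist p x" "\<bar>snd p - (t0 + t/2)\<bar> \<le> dist p x" for p i
  proof -
    have "\<bar>fst p $ i - yc $ i\<bar> \<le> norm (fst p - yc)" using component_le_norm_cart[of "fst p - yc" i] by simp
    also have "\<dots> = dist (fst p) (fst x)" by (simp add: x_def dist_norm)
    also have "\<dots> \<le> dist p x" by (rule dist_fst_le)
    finally show "\<bar>fst p $ i - yc $ i\<bar> \<le> dist p x" .
    have "\<bar>snd p - (t0 + t/2)\<bar> = dist (snd p) (snd x)" by (simp add: x_def dist_real_def)
    also have "\<dots> \<le> dist p x" by (rule dist_snd_le)
    finally show "\<bar>snd p - (t0 + t/2)\<bar> \<le> dist p x" .
  qed
  have ycx: "yc $ i = lo i + hk / 2" for i by (simp add: yc_def)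
  show ?thesis
  proof
    show "ball x (t/2) \<subseteq> beam j0"
    proof
      fix p assume "p \<in> ball x (t/2)"
      then have d: "dist p x < t/2" by (simp add: dist_commute)
      have "0 < fst p $ i \<and> fst p $ i < c i" for i
        using comp(1)[of p i] d ycx[of i] lo0[of i] hi[of i] hk1 by (auto simp: abs_le_iff)
      then show "p \<in> beam j0" by (auto simp: beam_def cuboidQ_def c_def mem_Times_iff)
    qed
    show "cball x (t/4) \<subseteq> boxP j0 t0 t j"
    proof
      fix p assume "p \<in> cball x (t/4)"
      then have d: "dist p x \<le> t/4" by (simp add: dist_commute)
      have a: "0 < fst p $ i \<and> fst p $ i < c i" for i
        using comp(1)[of p i] d ycx[of i] lo0[of i] hi[of i] hk1 t by (auto simp: abs_le_iff)
      have b: "lo i \<le> fst p $ i \<and> fst p $ i \<le> lo i + hk" for i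
        using comp(1)[of p i] d ycx[of i] hk1 t by (auto simp: abs_le_iff)
      have s: "t0 \<le> snd p \<and> snd p \<le> t0 + t" using comp(2)[of p] d t by (auto simp: abs_le_iff)
      show "p \<in> boxP j0 t0 t j"
        using a b s unfolding boxP_def cubeT_def cuboidQ_def mem_Times_iff
        by (auto simp: c_def hieq lo_def[symmetric] k_def[symmetric] kr_def[symmetric])
    qed
    show "boxP j0 t0 t j \<subseteq> beamM j0 M"
      using t tM by (auto simp: boxP_def cubeT_def beamM_def)
    show "dist x p \<le> (real CARD('m) + 1) * t" if p: "p \<in> boxP j0 t0 t j" for p
    proof -
      have b: "lo i \<le> fst p $ i \<and> fst p $ i \<le> lo i + hk" for i
        using p by (auto simp: boxP_def cubeT_def hieq lo_def[symmetric] k_def[symmetric] kr_def[symmetric])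
      have s: "t0 \<le> snd p \<and> snd p \<le> t0 + t" using p by (auto simp: boxP_def)
      have ci: "\<bar>(fst p - yc) $ i\<bar> \<le> t" for i using b[of i] ycx[of i] hk2 by (auto simp: abs_le_iff)
      have "norm (fst p - yc) \<le> (\<Sum>i\<in>UNIV. \<bar>(fst p - yc) $ i\<bar>)" by (rule norm_le_l1_cart)
      also have "\<dots> \<le> (\<Sum>i\<in>(UNIV::'m set). t)" by (rule sum_mono) (rule ci)
      finally have n1: "dist (fst p) yc \<le> real CARD('m) * t" by (simp add: dist_norm)
      have n2: "dist (snd p) (t0 + t/2) \<le> t" using s t by (auto simp: dist_real_def abs_le_iff)
      have "dist p x = sqrt ((dist (fst p) yc)\<^sup>2 + (dist (snd p) (t0 + t/2))\<^sup>2)"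
        by (metis x_def dist_Pair_Pair prod.collapse)
      also have "\<dots> \<le> dist (fst p) yc + dist (snd p) (t0 + t/2)"
        by (rule sqrt_sum_squares_le_sum) auto
      finally show ?thesis using n1 n2 by (simp add: dist_commute algebra_simps)
    qed
    define lov :: "real^'m" where "lov = (\<chi> i. lo i)"
    define hiv :: "real^'m" where "hiv = (\<chi> i. lo i + hk)"
    show "compact (cbox lov hiv \<times> {t0..t0+t})" by (intro compact_Times compact_cbox compact_Icc)
    show "boxP j0 t0 t j = (cbox lov hiv \<times> {t0..t0+t}) \<inter> beam j0"
      by (auto simp: boxP_def cubeT_def beam_def mem_box_cart lov_def hiv_def hieq lo_def[symmetric] k_def[symmetric] kr_def[symmetric])
  qed
qed



lemma G_disj:
  assumes zg: "zorich_group G j0" and g: "g \<in> G" and g': "g' \<in> G" and ne: "g \<noteq> g'"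
  shows "g ` beam j0 \<inter> g' ` beam j0 = {}"
proof (rule ccontr)
  assume "g ` beam j0 \<inter> g' ` beam j0 \<noteq> {}"
  then obtain b b' where b: "b \<in> beam j0" "b' \<in> beam j0" "g b = g' b'" by blast
  define k where "k = inv g' \<circ> g"
  have kG: "k \<in> G" unfolding k_def by (intro zg_facts(2)[OF zg] zg_facts(4)[OF zg] g g')
  have injg': "inj g'" using zg_facts(3)[OF zg g'] bij_is_inj by blast
  have surjg': "surj g'" using zg_facts(6)[OF zg g'] .
  have kb: "k b = b'" unfolding k_def using b(3) injg' by (simp add: inv_f_f)
  have "k \<noteq> id"
  proof
    assume "k = id"
    then have "inv g' (g v) = v" for v unfolding k_def by (metis comp_apply id_apply)
    then have "g v = g' v" for v by (metis surjg' surj_f_inv_f)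
    then show False using ne by auto
  qed
  then have "k ` beam j0 \<inter> beam j0 = {}" using zg_facts(8)[OF zg kG] by blast
  then show False using kb b by blast
qed

lemma G_cont:
  assumes zg: "zorich_group G j0" and g: "g \<in> G"
  shows "continuous_on S g"
  unfolding continuous_on_iff using zg_facts(5)[OF zg g] by (metis dist_commute)

lemma G_image_ball:
  assumes zg: "zorich_group G j0" and g: "g \<in> G"
  shows "g ` (A \<inter> ball c r) = g ` A \<inter> ball (g c) r"
proof -
  have "inj g" using zg_facts(3)[OF zg g] bij_is_inj by blast
  then have "g ` (A \<inter> ball c r) = g ` A \<inter> g ` ball c r" by (rule image_Int)
  also have "g ` ball c r = ball (g c) r"
    by (rule iso_cball_image(2)) (use zg_facts(5,6)[OF zg g] in auto)
  finally show ?thesis .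
qed

lemma cover_bound:
  fixes G :: "('m::finite pt \<Rightarrow> 'm pt) set"
  assumes zg: "zorich_group G j0" and K: "compact K" "K \<subseteq> beam j0"
    and cov: "\<And>y. y \<in> K \<Longrightarrow> dB G z y < R" and Rpos: "0 \<le> R"
  shows "measure lebesgue K \<le> measure lebesgue (ball z R)"
proof -
  have "K \<subseteq> (\<Union>g\<in>G. ball (inv g z) R)"
  proof
    fix y assume y: "y \<in> K"
    obtain g where g: "g \<in> G" "dist z (g y) < R" using dB_lt_ex[OF zg cov[OF y]] by blast
    then have "dist (inv g z) y < R" using dist_inv_move[OF zg g(1), of z y] by (simp add: dist_commute)
    then show "y \<in> (\<Union>g\<in>G. ball (inv g z) R)" using g(1) by auto
  qed
  then obtain F where F: "F \<subseteq> G" "finite F" "K \<subseteq> (\<Union>g\<in>F. ball (inv g z) R)"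
    using compactE_image[OF K(1), of G "\<lambda>g. ball (inv g z) R"] by auto
  define A where "A g = K \<inter> ball (inv g z) R" for g
  define E where "E g = g ` A g" for g
  have Al: "A g \<in> lmeasurable" for g
    unfolding A_def by (intro fmeasurable_Int_fmeasurable lmeasurable_compact K(1) fmeasurableD lmeasurable_ball)
  have El: "E g \<in> lmeasurable" if "g \<in> G" for g
  proof -
    have "E g = g ` K \<inter> ball (g (inv g z)) R" unfolding E_def A_def by (rule G_image_ball[OF zg that])
    moreover have "compact (g ` K)" by (rule compact_continuous_image[OF G_cont[OF zg that] K(1)])
    ultimately show ?thesis by (simp add: fmeasurable_Int_fmeasurable lmeasurable_compact fmeasurableD lmeasurable_ball)
  qed
  have AE: "measure lebesgue (A g) \<le> measure lebesgue (E g)" if g: "g \<in> G" for g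
  proof -
    have ig: "inv g \<in> G" by (rule zg_facts(4)[OF zg g])
    have injg: "inj g" using zg_facts(3)[OF zg g] bij_is_inj by blast
    have "inv g ` E g = A g" unfolding E_def using injg by (simp add: image_image inv_f_f)
    moreover have "measure lebesgue (inv g ` E g) \<le> measure lebesgue (E g)"
      by (rule iso_measure_le) (use zg_facts(5,6)[OF zg ig] El[OF g] \<open>inv g ` E g = A g\<close> Al in \<open>auto simp: fmeasurableD\<close>)
    ultimately show ?thesis by simp
  qed
  have "K \<subseteq> (\<Union>g\<in>F. A g)" using F(3) by (auto simp: A_def)
  then have "measure lebesgue K \<le> measure lebesgue (\<Union>g\<in>F. A g)"
    by (intro measure_mono_fmeasurable) (auto simp: lmeasurable_compact K(1) fmeasurableD F(2) Al intro!: fmeasurable.finite_UN)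
  also have "\<dots> \<le> (\<Sum>g\<in>F. measure lebesgue (A g))"
    by (rule measure_UNION_le) (use F(2) Al in \<open>auto simp: fmeasurableD\<close>)
  also have "\<dots> \<le> (\<Sum>g\<in>F. measure lebesgue (E g))"
    by (rule sum_mono) (use AE F(1) in blast)
  also have "\<dots> = measure lebesgue (\<Union>g\<in>F. E g)"
  proof (rule measure_UNION'[symmetric])
    show "finite F" by (rule F(2))
    show "E g \<in> lmeasurable" if "g \<in> F" for g using El F(1) that by blast
    show "pairwise (\<lambda>g g'. disjnt (E g) (E g')) F"
      unfolding pairwise_def disjnt_def
    proof (intro ballI impI)
      fix g g' assume "g \<in> F" "g' \<in> F" "g \<noteq> g'"
      then have "g ` beam j0 \<inter> g' ` beam j0 = {}" using G_disj[OF zg] F(1) by blast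
      moreover have "E g \<subseteq> g ` beam j0" "E g' \<subseteq> g' ` beam j0" using K(2) by (auto simp: E_def A_def)
      ultimately show "E g \<inter> E g' = {}" by blast
    qed
  qed
  also have "\<dots> \<le> measure lebesgue (ball z R)"
  proof (rule measure_mono_fmeasurable)
    show "(\<Union>g\<in>F. E g) \<subseteq> ball z R"
    proof
      fix y assume "y \<in> (\<Union>g\<in>F. E g)"
      then obtain g w where g: "g \<in> F" "w \<in> K" "dist (inv g z) w < R" "y = g w"
        by (auto simp: E_def A_def)
      have gG: "g \<in> G" using g(1) F(1) by blast
      have "dist z y = dist w (inv g z)" using dist_inv_move[OF zg gG, of z w] g(4) by simp
      then show "y \<in> ball z R" using g(3) by (simp add: dist_commute)
    qed
    show "(\<Union>g\<in>F. E g) \<in> sets lebesgue" using El F by (auto intro!: sets.finite_UN simp: fmeasurableD)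
    show "ball z R \<in> lmeasurable" by (rule lmeasurable_ball)
  qed
  finally show ?thesis .
qed



lemma eta_mono:
  assumes "qs_gauge \<eta>" "0 \<le> a" "a \<le> b"
  shows "\<eta> a \<le> \<eta> b"
  using eta_props(2)[OF assms(1) assms(2), of b] assms(3) by (cases "a = b") auto

lemma box_bounds:
  fixes G :: "('m::finite pt \<Rightarrow> 'm pt) set" and j0 :: 'm
  assumes zg: "zorich_group G j0" and qs: "qs_gauge \<eta>"
    and Q: "quasisymmetric_on (dB G) (dB G) (beamM j0 M) f \<eta>"
    and img: "f ` beamM j0 M \<subseteq> beam j0"
    and t: "0 < t" "t < 1/2" and tM: "t0 < M - 1" and j: "j \<in> cube_idx j0 t"
  defines "P \<equiv> boxP j0 t0 t j" and "H \<equiv> \<eta> (4 * (real CARD('m) + 1))"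
    and "\<kappa> \<equiv> measure lebesgue (ball (0::'m pt) 1)"
  shows "\<kappa> / (2*H)^(CARD('m)+1) \<le> measure lebesgue (f`P) / (dB_diam G (f`P))^(CARD('m)+1)
      \<and> measure lebesgue (f`P) / (dB_diam G (f`P))^(CARD('m)+1) \<le> \<kappa> * 2^(CARD('m)+1)"
proof -
  define n where "n = CARD('m) + 1"
  have DIMn: "DIM('m pt) = n" by (simp add: n_def)
  obtain x :: "'m pt" and Kc where gx: "ball x (t/2) \<subseteq> beam j0" "cball x (t/4) \<subseteq> P"
    "P \<subseteq> beamM j0 M" "\<And>p. p \<in> P \<Longrightarrow> dist x p \<le> (real CARD('m) + 1) * t"
    "compact Kc" "P = Kc \<inter> beam j0"
    using box_geom[OF t tM j] unfolding P_def by metis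
  have cont: "continuous_on (beamM j0 M) f" by (rule f_cont[OF zg qs Q img])
  have inj: "inj_on f (beamM j0 M)" using Q by (simp add: quasisymmetric_on_def)
  have PB: "P \<subseteq> beam j0" using gx(3) beamM_sub by blast
  have fPB: "f ` P \<subseteq> beam j0" using gx(3) img by blast
  define U where "U = ball x (t/4)"
  have UP: "U \<subseteq> P" using gx(2) ball_subset_cball unfolding U_def by blast
  have xU: "x \<in> U" using t by (simp add: U_def)
  have xP: "x \<in> P" using xU UP by blast
  have xB: "x \<in> beam j0" using xP PB by blast
  have fU: "open (f ` U)"
  proof (rule invariance_of_domain)
    have "U \<subseteq> beamM j0 M" using UP gx(3) by blast
    then show "continuous_on U f" by (rule continuous_on_subset[OF cont])
    show "open U" by (simp add: U_def)
    show "inj_on f U" using inj UP gx(3) inj_on_subset by blast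
  qed
  have nB: "(0, 0) \<notin> beam j0" by (simp add: beam_def cuboidQ_def)
  have cne: "- (f ` U) \<noteq> {}" using nB UP fPB by blast
  have ccl: "closed (- (f ` U))" using fU by (simp add: closed_Compl)
  define \<delta> where "\<delta> = infdist (f x) (- (f ` U))"
  have \<delta>pos: "0 < \<delta>" unfolding \<delta>_def by (rule infdist_pos_not_in_closed[OF ccl cne]) (use xU in auto)
  have ballU: "ball (f x) \<delta> \<subseteq> f ` U"
  proof
    fix y assume y: "y \<in> ball (f x) \<delta>"
    show "y \<in> f ` U"
    proof (rule ccontr)
      assume "y \<notin> f ` U"
      then have "\<delta> \<le> dist (f x) y" unfolding \<delta>_def by (intro infdist_le) auto
      then show False using y by simp
    qed
  qed
  obtain z where z: "z \<in> - (f ` U)" "\<delta> = dist (f x) z"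
    using infdist_attains_inf[OF ccl cne, of "f x"] unfolding \<delta>_def by metis
  have cbP: "cball x (t/4) \<subseteq> beamM j0 M" using gx(2,3) by blast
  have cfc: "compact (f ` cball x (t/4))"
    by (rule compact_continuous_image[OF continuous_on_subset[OF cont cbP] compact_cball])
  have "z \<in> closure (ball (f x) \<delta>)" using z(2) \<delta>pos by (simp add: closure_ball)
  also have "\<dots> \<subseteq> closure (f ` U)" using ballU by (rule closure_mono)
  also have "\<dots> \<subseteq> f ` cball x (t/4)"
    by (rule closure_minimal) (use cfc compact_imp_closed in \<open>auto simp: U_def\<close>)
  finally obtain u where u: "u \<in> cball x (t/4)" "z = f u" by blast
  have uU: "u \<notin> U" using u z(1) by blast
  have dxu: "dist x u = t/4" using u(1) uU by (simp add: U_def)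
  have uP: "u \<in> P" using u(1) gx(2) by blast
  have uB: "u \<in> beam j0" using uP PB by blast
  have xu: "x \<noteq> u" using dxu t by auto
  have dBxu: "dB G x u = t/4"
  proof (rule antisym)
    show "dB G x u \<le> t/4" using dB_le_dist[OF zg, of x u] dxu by simp
    have "min (dist x u) (t/2) \<le> dB G x u" by (rule dB_ge_min[OF zg xB uB gx(1)])
    then show "t/4 \<le> dB G x u" using dxu t by simp
  qed
  have fxu: "f x \<noteq> f u" using inj xu xP uP gx(3) by (meson inj_onD subsetD)
  have c0: "0 < dB G (f x) (f u)" by (rule dB_pos[OF zg _ _ fxu]) (use fPB xP uP in auto)
  have c1: "dB G (f x) (f u) \<le> \<delta>" using dB_le_dist[OF zg, of "f x" "f u"] z(2) u(2) by simp
  have Hpos: "0 < H" unfolding H_def using eta_props(2)[OF qs, of 0] eta_props(1)[OF qs] by simp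
  have bnd1: "dB G (f x) (f p) \<le> H * \<delta>" if p: "p \<in> P" for p
  proof -
    have "dB G (f x) (f p) \<le> \<eta> (dB G x p / dB G x u) * dB G (f x) (f u)"
      by (rule qs_mult[OF Q _ _ _ xu c0]) (use xP p uP gx(3) in auto)
    also have "\<eta> (dB G x p / dB G x u) \<le> H"
    proof -
      have "dB G x p \<le> (real CARD('m) + 1) * t" using dB_le_dist[OF zg, of x p] gx(4)[OF p] by linarith
      then have "dB G x p / dB G x u \<le> 4 * (real CARD('m) + 1)" using t by (simp add: dBxu field_simps)
      moreover have "0 \<le> dB G x p / dB G x u" using dB_nonneg[OF zg] dBxu t by simp
      ultimately show ?thesis unfolding H_def by (rule eta_mono[OF qs, rotated])
    qed
    then have "\<eta> (dB G x p / dB G x u) * dB G (f x) (f u) \<le> H * \<delta>"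
      using c0 c1 Hpos by (meson less_imp_le mult_mono)
    finally show ?thesis .
  qed
  have bnd2: "dB G y y' \<le> 2 * H * \<delta>" if yP: "y \<in> f ` P" "y' \<in> f ` P" for y y'
  proof -
    obtain p q where "p \<in> P" "q \<in> P" "y = f p" "y' = f q" using yP by blast
    then have "dB G y y' \<le> dB G y (f x) + dB G (f x) y'" using dB_triangle[OF zg] by blast
    also have "dB G y (f x) = dB G (f x) y" by (rule dB_sym[OF zg])
    moreover have "dB G (f x) y \<le> H * \<delta>" using bnd1[OF \<open>p \<in> P\<close>] \<open>y = f p\<close> by simp
    moreover have "dB G (f x) y' \<le> H * \<delta>" using bnd1[OF \<open>q \<in> P\<close>] \<open>y' = f q\<close> by simp
    ultimately show ?thesis by linarith
  qed
  define D where "D = dB_diam G (f ` P)"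
  have bdd: "bdd_above ((\<lambda>pr. dB G (fst pr) (snd pr)) ` (f ` P \<times> f ` P))"
  proof (rule bdd_aboveI2)
    fix pr :: "'m pt \<times> 'm pt" assume "pr \<in> f ` P \<times> f ` P"
    then show "dB G (fst pr) (snd pr) \<le> 2 * H * \<delta>" using bnd2 by (simp add: mem_Times_iff)
  qed
  have Dle: "D \<le> 2 * H * \<delta>" unfolding D_def dB_diam_def
  proof (rule cSUP_least)
    show "f ` P \<times> f ` P \<noteq> {}" using xP by blast
    fix pr :: "'m pt \<times> 'm pt" assume "pr \<in> f ` P \<times> f ` P"
    then show "dB G (fst pr) (snd pr) \<le> 2 * H * \<delta>" using bnd2 by (simp add: mem_Times_iff)
  qed
  have Dge: "dB G y y' \<le> D" if "y \<in> f ` P" "y' \<in> f ` P" for y y'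
    unfolding D_def dB_diam_def using cSUP_upper[OF _ bdd, of "(y, y')"] that by auto
  have Dpos: "0 < D" using Dge[of "f x" "f u"] c0 xP uP by fastforce
  define Pk where "Pk k = Kc \<inter> {p. 1 / real (Suc k) \<le> infdist p (- beam j0)}" for k
  have Pkc: "compact (Pk k)" for k unfolding Pk_def
    by (intro compact_Int_closed gx(5) closed_Collect_le continuous_on_infdist continuous_intros)
  have Bcl: "closed (- beam j0)" by (rule closed_Compl[OF open_beam])
  have Bne: "- beam j0 \<noteq> {}" using nB by blast
  have PkP: "Pk k \<subseteq> P" for k
  proof
    fix p assume p: "p \<in> Pk k"
    have "p \<in> beam j0"
    proof (rule ccontr)
      assume "p \<notin> beam j0"
      then have "infdist p (- beam j0) = 0" by (intro infdist_zero) simp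
      then show False using p by (simp add: Pk_def)
    qed
    then show "p \<in> P" using p gx(6) by (simp add: Pk_def)
  qed
  have PU: "P = (\<Union>k. Pk k)"
  proof
    show "(\<Union>k. Pk k) \<subseteq> P" using PkP by blast
    show "P \<subseteq> (\<Union>k. Pk k)"
    proof
      fix p assume p: "p \<in> P"
      then have "0 < infdist p (- beam j0)" using PB by (intro infdist_pos_not_in_closed[OF Bcl Bne]) auto
      then obtain k where "inverse (real (Suc k)) < infdist p (- beam j0)" using reals_Archimedean by blast
      then have "1 / real (Suc k) \<le> infdist p (- beam j0)" by (simp add: inverse_eq_divide)
      then have "p \<in> Pk k" using p gx(6) by (simp add: Pk_def)
      then show "p \<in> (\<Union>k. Pk k)" by blast
    qed
  qed
  have Kbound: "measure lebesgue (f ` K) \<le> measure lebesgue (ball (f x) (2 * D))"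
    if K: "compact K" "K \<subseteq> P" for K
  proof (rule cover_bound[OF zg])
    show "compact (f ` K)"
      by (rule compact_continuous_image[OF continuous_on_subset[OF cont] K(1)]) (use K gx(3) in blast)
    show "f ` K \<subseteq> beam j0" using K(2) fPB by blast
    show "dB G (f x) y < 2 * D" if "y \<in> f ` K" for y using Dge[of "f x" y] that K(2) xP Dpos by fastforce
    show "0 \<le> 2 * D" using Dpos by simp
  qed
  have fPeq: "f ` P = (\<Union>k. f ` Pk k)" using PU by blast
  have finbnd: "measure lebesgue (\<Union>k\<in>I'. f ` Pk k) \<le> measure lebesgue (ball (f x) (2 * D))"
    if "finite I'" for I'
  proof -
    have "(\<Union>k\<in>I'. f ` Pk k) = f ` (\<Union>k\<in>I'. Pk k)" by blast
    moreover have "compact (\<Union>k\<in>I'. Pk k)" using that Pkc by (intro compact_UN) auto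
    moreover have "(\<Union>k\<in>I'. Pk k) \<subseteq> P" using PkP by blast
    ultimately show ?thesis using Kbound by metis
  qed
  have fPk: "f ` Pk k \<in> lmeasurable" for k
    by (intro lmeasurable_compact compact_continuous_image[OF continuous_on_subset[OF cont] Pkc])
       (use PkP gx(3) in blast)
  have fPm: "f ` P \<in> lmeasurable"
    unfolding fPeq using fmeasurable_UN_bound[of UNIV "\<lambda>k. f ` Pk k" lebesgue, OF _ fPk finbnd] by auto
  have upper: "measure lebesgue (f ` P) \<le> measure lebesgue (ball (f x) (2 * D))"
    unfolding fPeq using measure_UN_bound[of UNIV "\<lambda>k. f ` Pk k" lebesgue, OF _ fPk finbnd] by auto
  have lower: "measure lebesgue (ball (f x) \<delta>) \<le> measure lebesgue (f ` P)"
    by (rule measure_mono_fmeasurable[OF _ _ fPm]) (use ballU UP in \<open>auto simp: fmeasurableD[OF lmeasurable_ball]\<close>)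
  have kpos: "0 < \<kappa>" unfolding \<kappa>_def by (rule unit_ball_pos)
  have mb1: "measure lebesgue (ball (f x) (2 * D)) = \<kappa> * (2 * D) ^ n"
  proof -
    have "measure lebesgue (ball (f x) (2 * D)) = (2 * D) ^ DIM('m pt) * measure lebesgue (ball (0::'m pt) 1)"
      by (rule measure_ball_eq) (use Dpos in simp)
    then show ?thesis by (simp only: DIMn \<kappa>_def mult.commute)
  qed
  have mb2: "measure lebesgue (ball (f x) \<delta>) = \<kappa> * \<delta> ^ n"
  proof -
    have "measure lebesgue (ball (f x) \<delta>) = \<delta> ^ DIM('m pt) * measure lebesgue (ball (0::'m pt) 1)"
      by (rule measure_ball_eq) (use \<delta>pos in simp)
    then show ?thesis by (simp only: DIMn \<kappa>_def mult.commute)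
  qed
  define m where "m = measure lebesgue (f ` P)"
  have Dn: "0 < D ^ n" using Dpos by simp
  have r1: "m / D ^ n \<le> \<kappa> * 2 ^ n"
  proof -
    have "m \<le> \<kappa> * 2 ^ n * D ^ n" using upper mb1 by (simp add: m_def power_mult_distrib)
    then show ?thesis using Dn by (simp add: divide_le_eq)
  qed
  have r2: "\<kappa> / (2 * H) ^ n \<le> m / D ^ n"
  proof -
    have "D ^ n \<le> (2 * H * \<delta>) ^ n" using Dle Dpos by (intro power_mono) auto
    then have "\<kappa> * D ^ n \<le> \<kappa> * ((2 * H) ^ n * \<delta> ^ n)" using kpos by (simp add: power_mult_distrib)
    also have "\<dots> = (2 * H) ^ n * (\<kappa> * \<delta> ^ n)" by simp
    also have "\<dots> \<le> (2 * H) ^ n * m" using lower mb2 Hpos by (simp add: m_def)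
    finally have "\<kappa> * D ^ n \<le> (2 * H) ^ n * m" .
    moreover have "0 < (2 * H) ^ n" using Hpos by simp
    ultimately show ?thesis using Dn by (simp add: divide_le_eq le_divide_eq mult.commute)
  qed
  show ?thesis using r1 r2 by (simp add: m_def D_def n_def)
qed



lemma card_cube_idx:
  fixes j0 :: "'m::finite"
  assumes "0 < t"
  shows "real (card (cube_idx j0 t)) = 2 * (real_of_int \<lfloor>1/t\<rfloor>) ^ CARD('m)"
proof -
  define k where "k = \<lfloor>1/t\<rfloor>"
  have k0: "0 \<le> k" using assms by (simp add: k_def)
  define c :: "'m \<Rightarrow> int" where "c i = (if i = j0 then 2 else 1)" for i
  have eq: "cube_idx j0 t = Pi\<^sub>E UNIV (\<lambda>i. {0..<c i * k})"
    unfolding PiE_UNIV_domain cube_idx_def Pi_def c_def k_def by auto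
  have "card (cube_idx j0 t) = (\<Prod>i\<in>UNIV. card {0..<c i * k})"
    unfolding eq by (rule card_PiE) simp
  also have "\<dots> = (\<Prod>i\<in>UNIV. nat (c i * k))" by simp
  finally have "real (card (cube_idx j0 t)) = (\<Prod>i\<in>UNIV. real (nat (c i * k)))" by simp
  also have "\<dots> = (\<Prod>i\<in>UNIV. real_of_int (c i) * real_of_int k)"
    using k0 by (intro prod.cong) (auto simp: c_def)
  also have "\<dots> = (\<Prod>i\<in>UNIV. real_of_int (c i)) * real_of_int k ^ CARD('m)"
    by (simp add: prod.distrib)
  also have "(\<Prod>i\<in>UNIV. real_of_int (c i)) = 2"
  proof -
    have "(\<Prod>i\<in>UNIV. real_of_int (c i)) = (\<Prod>i\<in>UNIV. if i = j0 then 2 else 1)"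
      by (intro prod.cong) (auto simp: c_def)
    also have "\<dots> = 2" by (subst prod.delta) auto
    finally show ?thesis .
  qed
  finally show ?thesis by (simp add: k_def)
qed

lemma count_lim:
  fixes j0 :: "'m::finite"
  shows "((\<lambda>t. real (card (cube_idx j0 t)) / t powr (1 - real (CARD('m) + 1))) \<longlongrightarrow> 2) (at_right 0)"
proof -
  have ev: "\<forall>\<^sub>F t in at_right 0. 2 * (real_of_int \<lfloor>1/t\<rfloor> * t) ^ CARD('m)
              = real (card (cube_idx j0 t)) / t powr (1 - real (CARD('m) + 1))"
    using eventually_at_right_less[of "0::real"]
  proof (rule eventually_mono)
    fix t :: real assume t: "0 < t"
    have "t powr (1 - real (CARD('m) + 1)) = inverse (t ^ CARD('m))"
      using t by (simp add: powr_minus powr_realpow)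
    then show "2 * (real_of_int \<lfloor>1/t\<rfloor> * t) ^ CARD('m)
              = real (card (cube_idx j0 t)) / t powr (1 - real (CARD('m) + 1))"
      using t by (simp add: card_cube_idx[OF t] power_mult_distrib divide_inverse)
  qed
  have lim1: "((\<lambda>t. real_of_int \<lfloor>1/t\<rfloor> * t) \<longlongrightarrow> 1) (at_right 0)"
  proof (rule tendsto_sandwich[of "\<lambda>t. 1 - t" _ _ "\<lambda>t. 1"])
    show "\<forall>\<^sub>F t in at_right 0. 1 - t \<le> real_of_int \<lfloor>1/t\<rfloor> * t"
      using eventually_at_right_less[of "0::real"]
    proof (rule eventually_mono)
      fix t :: real assume t: "0 < t"
      have "1/t - 1 \<le> real_of_int \<lfloor>1/t\<rfloor>" by linarith
      then have "(1/t - 1) * t \<le> real_of_int \<lfloor>1/t\<rfloor> * t" using t by (intro mult_right_mono) auto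
      then show "1 - t \<le> real_of_int \<lfloor>1/t\<rfloor> * t" using t by (simp add: algebra_simps)
    qed
    show "\<forall>\<^sub>F t in at_right 0. real_of_int \<lfloor>1/t\<rfloor> * t \<le> 1"
      using eventually_at_right_less[of "0::real"]
    proof (rule eventually_mono)
      fix t :: real assume t: "0 < t"
      have "real_of_int \<lfloor>1/t\<rfloor> \<le> 1/t" by (rule of_int_floor_le)
      then have "real_of_int \<lfloor>1/t\<rfloor> * t \<le> (1/t) * t" using t by (intro mult_right_mono) auto
      then show "real_of_int \<lfloor>1/t\<rfloor> * t \<le> 1" using t by simp
    qed
    show "((\<lambda>t. 1 - t) \<longlongrightarrow> 1) (at_right (0::real))"
      by (rule tendsto_eq_intros | simp)+
  qed simp
  have "((\<lambda>t. 2 * (real_of_int \<lfloor>1/t\<rfloor> * t) ^ CARD('m)) \<longlongrightarrow> 2 * 1 ^ CARD('m)) (at_right 0)"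
    by (intro tendsto_mult tendsto_const tendsto_power lim1)
  then have "((\<lambda>t. 2 * (real_of_int \<lfloor>1/t\<rfloor> * t) ^ CARD('m)) \<longlongrightarrow> 2) (at_right 0)" by simp
  then show ?thesis using ev by (rule Lim_transform_eventually)
qed


theorem lemma3p2:
  fixes G :: "((real^'m::finite) \<times> real \<Rightarrow> (real^'m) \<times> real) set"
    and j0 :: 'm and \<eta> :: "real \<Rightarrow> real"
  assumes "zorich_group G j0" and "qs_gauge \<eta>"
  shows "((\<lambda>t. real (card (cube_idx j0 t)) / t powr (1 - real (CARD('m) + 1))) \<longlongrightarrow> 2)
            (at_right 0)
       \<and> (\<exists>C1>1. \<forall>M f t0 t.
            quasisymmetric_on (dB G) (dB G) (beamM j0 M) f \<eta> \<and> f ` beamM j0 M \<subseteq> beam j0 \<and>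
            t0 < M - 1 \<and> 0 < t \<and> t < 1/2 \<longrightarrow>
            (\<forall>j\<in>cube_idx j0 t.
               1 / C1 \<le> measure lebesgue (f ` boxP j0 t0 t j) / (dB_diam G (f ` boxP j0 t0 t j)) ^ (CARD('m) + 1)
             \<and> measure lebesgue (f ` boxP j0 t0 t j) / (dB_diam G (f ` boxP j0 t0 t j)) ^ (CARD('m) + 1) \<le> C1))"
proof
  show "((\<lambda>t. real (card (cube_idx j0 t)) / t powr (1 - real (CARD('m) + 1))) \<longlongrightarrow> 2) (at_right 0)"
    by (rule count_lim)
  define H where "H = \<eta> (4 * (real CARD('m) + 1))"
  define \<kappa> where "\<kappa> = measure lebesgue (ball (0::'m pt) 1)"
  define n where "n = CARD('m) + 1"
  define C1 where "C1 = max 2 (max (\<kappa> * 2 ^ n) ((2 * H) ^ n / \<kappa>))"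
  have Hpos: "0 < H" unfolding H_def using eta_props(2)[OF assms(2), of 0] eta_props(1)[OF assms(2)] by simp
  have kpos: "0 < \<kappa>" unfolding \<kappa>_def by (rule unit_ball_pos)
  have C1: "1 < C1" "\<kappa> * 2 ^ n \<le> C1" "(2 * H) ^ n / \<kappa> \<le> C1" by (auto simp: C1_def)
  have iC: "1 / C1 \<le> \<kappa> / (2 * H) ^ n"
  proof -
    have p: "0 < (2 * H) ^ n / \<kappa>" using Hpos kpos by simp
    have "1 / C1 \<le> 1 / ((2 * H) ^ n / \<kappa>)" proof (rule divide_left_mono[OF C1(3)])
      have "0 < C1" using C1(1) by simp
      then show "0 < C1 * ((2 * H) ^ n / \<kappa>)" using p by (rule mult_pos_pos)
    qed simp
    also have "\<dots> = \<kappa> / (2 * H) ^ n" by simp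
    finally show ?thesis .
  qed
  show "\<exists>C1>1. \<forall>M f t0 t.
            quasisymmetric_on (dB G) (dB G) (beamM j0 M) f \<eta> \<and> f ` beamM j0 M \<subseteq> beam j0 \<and>
            t0 < M - 1 \<and> 0 < t \<and> t < 1/2 \<longrightarrow>
            (\<forall>j\<in>cube_idx j0 t.
               1 / C1 \<le> measure lebesgue (f ` boxP j0 t0 t j) / (dB_diam G (f ` boxP j0 t0 t j)) ^ (CARD('m) + 1)
             \<and> measure lebesgue (f ` boxP j0 t0 t j) / (dB_diam G (f ` boxP j0 t0 t j)) ^ (CARD('m) + 1) \<le> C1)"
  proof (intro exI[of _ C1] conjI C1(1) allI impI ballI)
    fix M f t0 t j
    assume h: "quasisymmetric_on (dB G) (dB G) (beamM j0 M) f \<eta> \<and> f ` beamM j0 M \<subseteq> beam j0 \<and>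
            t0 < M - 1 \<and> 0 < t \<and> t < 1/2" and j: "j \<in> cube_idx j0 t"
    have bb: "\<kappa> / (2*H)^n \<le> measure lebesgue (f ` boxP j0 t0 t j) / (dB_diam G (f ` boxP j0 t0 t j))^n
      \<and> measure lebesgue (f ` boxP j0 t0 t j) / (dB_diam G (f ` boxP j0 t0 t j))^n \<le> \<kappa> * 2^n"
      unfolding H_def \<kappa>_def n_def
      by (rule box_bounds[OF assms(1,2)]) (use h j in auto)
    show "1 / C1 \<le> measure lebesgue (f ` boxP j0 t0 t j) / (dB_diam G (f ` boxP j0 t0 t j)) ^ (CARD('m) + 1)"
      using bb iC by (simp add: n_def)
    show "measure lebesgue (f ` boxP j0 t0 t j) / (dB_diam G (f ` boxP j0 t0 t j)) ^ (CARD('m) + 1) \<le> C1"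
      using bb C1(2) by (simp add: n_def)
  qed
qed

end
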